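(* Consider $\texttt{CCI}_{n,\mu}(T,C,I,J)$ with $\mathcal{S},\mathcal{C}^{\text{out}},\mathcal{C}^{\text{in}}\subseteq\mathbb{N}$, and assume $\mathbb{E}[T^{1+\varepsilon}]<\infty$ for some $\varepsilon>0$, $\inf_i\{\lambda_i:\lambda_i>0\}>0$ and $\inf_j\{\varrho_j:\varrho_j>0\}>0$. Let $t,s\in\mathcal{S}$ be two vertex types of which at least one is not stable at tolerance $\tau\in(0,1)$, and for $a\in[\lfloor\mu n\rfloor]$ let $\mathcal{A}^{(a)}_{ts}$ be the event that arc $a$ is placed from a vertex of type $t$ to a vertex of type $s$. Then there exists a constant $\widehat{C}>0$ such that for any fixed $r>0$, $$\mathbb{P}(\mathcal{A}^{(a)}_{ts})\le\widehat{C}\sqrt{q_tq_s}\Big(\sqrt{q_tq_s}+\frac{\log(n)}{\sqrt n}+\frac1{n^r}\Big).$$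
   Context: Inputs: type distribution $T$ on $\mathcal{S}$, $q_k=\mathbb{P}(T=k)$; colour distribution $C=(C^{\text{out}},C^{\text{in}})$; indicators $I:\mathcal{S}\times\mathcal{C}^{\text{out}}\to\{0,1\}$, $J:\mathcal{S}\times\mathcal{C}^{\text{in}}\to\{0,1\}$; $\mu>0$; $\lambda_i=\sum_kq_kI(k,i)$, $\varrho_j=\sum_kq_kJ(k,j)$. $\texttt{CCI}_{n,\mu}(T,C,I,J)$: vertex set $[n]$, i.i.d. types $T_v\sim T$; for each $a\in[\lfloor\mu n\rfloor]$ an independent colour $C_a\sim C$; choose $v$ uniformly from $\{v:I(T_v,C^{\text{out}}_a)=1\}$ and independently $w$ uniformly from $\{w:J(T_w,C^{\text{in}}_a)=1\}$, and add arc $a=(v,w)$. Stability: $u_n^\uparrow(\tau)=\inf\{t:q_s<n^{-1+\tau}\ \forall s\ge t\}$; type $t$ is stable at tolerance $\tau$ if $t<u_n^\uparrow(\tau)$. *)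

theory Defs
  imports "HOL-Probability.Probability"
begin

text \<open>Vertices are 0,...,n-1 (standing for [n]); arcs are indexed 0,...,floor(mu n)-1.\<close>

definition q :: "nat pmf \<Rightarrow> nat \<Rightarrow> real" where
  "q T k = pmf T k"

definition lam :: "nat pmf \<Rightarrow> (nat \<Rightarrow> nat \<Rightarrow> bool) \<Rightarrow> nat \<Rightarrow> real" where
  "lam T I i = (\<Sum>k. q T k * (if I k i then 1 else 0))"

definition rho :: "nat pmf \<Rightarrow> (nat \<Rightarrow> nat \<Rightarrow> bool) \<Rightarrow> nat \<Rightarrow> real" where
  "rho T J j = (\<Sum>k. q T k * (if J k j then 1 else 0))"

definition num_arcs :: "nat \<Rightarrow> real \<Rightarrow> nat" where
  "num_arcs n \<mu> = nat \<lfloor>\<mu> * real n\<rfloor>"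

text \<open>Placement of a single arc given the vertex types and its colour c = (c_out, c_in).
  Convention: if no vertex is eligible as tail or as head, the arc is not placed (None).\<close>
definition arc_pmf :: "nat \<Rightarrow> (nat \<Rightarrow> nat) \<Rightarrow> (nat \<Rightarrow> nat \<Rightarrow> bool) \<Rightarrow> (nat \<Rightarrow> nat \<Rightarrow> bool)
    \<Rightarrow> nat \<times> nat \<Rightarrow> (nat \<times> nat) option pmf" where
  "arc_pmf n tys I J c =
     (let V = {v. v < n \<and> I (tys v) (fst c)}; W = {w. w < n \<and> J (tys w) (snd c)}
      in if V = {} \<or> W = {} then return_pmf None
         else map_pmf Some (pair_pmf (pmf_of_set V) (pmf_of_set W)))"

definition CCI :: "nat \<Rightarrow> real \<Rightarrow> nat pmf \<Rightarrow> (nat \<times> nat) pmf \<Rightarrow> (nat \<Rightarrow> nat \<Rightarrow> bool)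
    \<Rightarrow> (nat \<Rightarrow> nat \<Rightarrow> bool) \<Rightarrow> ((nat \<Rightarrow> nat) \<times> (nat \<Rightarrow> (nat \<times> nat) option)) pmf" where
  "CCI n \<mu> T C I J =
     do {
       tys \<leftarrow> Pi_pmf {..<n} 0 (\<lambda>_. T);
       cols \<leftarrow> Pi_pmf {..<num_arcs n \<mu>} (0, 0) (\<lambda>_. C);
       arcs \<leftarrow> Pi_pmf {..<num_arcs n \<mu>} None (\<lambda>a. arc_pmf n tys I J (cols a));
       return_pmf (tys, arcs)
     }"

definition arc_event :: "nat \<Rightarrow> nat \<Rightarrow> nat
    \<Rightarrow> ((nat \<Rightarrow> nat) \<times> (nat \<Rightarrow> (nat \<times> nat) option)) set" where
  "arc_event a t s = {(tys, arcs). \<exists>v w. arcs a = Some (v, w) \<and> tys v = t \<and> tys w = s}"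

definition u_up :: "nat pmf \<Rightarrow> nat \<Rightarrow> real \<Rightarrow> nat" where
  "u_up T n \<tau> = Inf {t. \<forall>s\<ge>t. q T s < real n powr (-1 + \<tau>)}"

definition stable :: "nat pmf \<Rightarrow> nat \<Rightarrow> real \<Rightarrow> nat \<Rightarrow> bool" where
  "stable T n \<tau> t \<longleftrightarrow> t < u_up T n \<tau>"

end

theory Submission
  imports Defs
begin


lemma choose_shift2:
  "(m choose k) * ((m+1)*(m+2)) = ((m+2) choose (k+2)) * ((k+1)*(k+2))"
proof -
  have 1: "Suc m * (m choose k) = (Suc m choose Suc k) * Suc k"
    by (rule Suc_times_binomial_eq)
  have 2: "Suc (Suc m) * (Suc m choose Suc k) = (Suc (Suc m) choose Suc (Suc k)) * Suc (Suc k)"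
    by (rule Suc_times_binomial_eq)
  have "(m choose k) * ((m+1)*(m+2)) = (m+2) * ((Suc m) * (m choose k))" by (simp add: algebra_simps)
  also have "\<dots> = (m+2) * (Suc m choose Suc k) * Suc k" using 1 by (metis mult.assoc)
  also have "\<dots> = ((m+2) choose (k+2)) * (k+2) * Suc k" using 2 by (metis add_2_eq_Suc')
  finally show ?thesis by (simp add: algebra_simps)
qed

lemma binom_inv_sum:
  fixes p :: real
  assumes p: "0 < p" "p \<le> 1"
  shows "(\<Sum>k\<le>m. real (m choose k) * p^k * (1-p)^(m-k) * (1/(1+real k)^2))
           \<le> 2/((real m+1)*(real m+2)*p^2)"
proof -
  define c where "c = 2/((real m+1)*(real m+2)*p^2)"
  define g where "g = (\<lambda>j. real ((m+2) choose j) * p^j * (1-p)^((m+2)-j))"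
  have gnn: "\<And>j. g j \<ge> 0" unfolding g_def using p by auto
  have hterm: "real (m choose k) * p^k * (1-p)^(m-k) * (1/(1+real k)^2) \<le> c * g (k+2)" for k
  proof -
    have e: "real (m choose k) * ((real m+1)*(real m+2)) = real ((m+2) choose (k+2)) * ((real k+1)*(real k+2))"
      using arg_cong[OF choose_shift2[of m k], of real] by (simp del: binomial_Suc_Suc add: algebra_simps)
    have a: "1/(1+real k)^2 \<le> 2/((real k+1)*(real k+2))"
    proof -
      have "(real k+1)*(real k+2) \<le> 2*(1+real k)^2" by (simp add: power2_eq_square algebra_simps)
      moreover have "0 < (1+real k)^2" "0 < (real k+1)*(real k+2)" by auto
      ultimately show ?thesis by (simp add: divide_simps)
    qed
    have "real (m choose k) * p^k * (1-p)^(m-k) * (1/(1+real k)^2)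
          \<le> real (m choose k) * p^k * (1-p)^(m-k) * (2/((real k+1)*(real k+2)))"
      using p by (intro mult_left_mono a) auto
    also have "\<dots> = (real (m choose k) * ((real m+1)*(real m+2))) * (p^k * (1-p)^(m-k) * 2) / (((real m+1)*(real m+2))*((real k+1)*(real k+2)))"
    proof -
      have gen: "\<And>x a b A B::real. A \<noteq> 0 \<Longrightarrow> x*a*b*(2/B) = (x*A)*(a*b*2)/(A*B)" by simp
      show ?thesis by (rule gen) auto
    qed
    also have "\<dots> = real ((m+2) choose (k+2)) * (p^k * (1-p)^(m-k) * 2) / ((real m+1)*(real m+2))"
    proof -
      have gen: "\<And>x y A B::real. B \<noteq> 0 \<Longrightarrow> (x*B)*y/(A*B) = x*y/A" by simp
      show ?thesis unfolding e by (rule gen) auto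
    qed
    also have "\<dots> = c * g (k+2)"
    proof -
      have h1: "p^(k+2) = p^k*p^2" by (simp only: power_add)
      have h2: "(m+2)-(k+2) = m-k" by simp
      have gen: "\<And>x a b A P::real. P \<noteq> 0 \<Longrightarrow> x*(a*b*2)/A = 2/(A*P) * (x*(a*P)*b)" by simp
      show ?thesis unfolding c_def g_def h1 h2 by (rule gen) (use p in auto)
    qed
    finally show ?thesis .
  qed
  have S1: "(\<Sum>k\<le>m. real (m choose k) * p^k * (1-p)^(m-k) * (1/(1+real k)^2)) \<le> c * (\<Sum>k\<le>m. g (k+2))"
    unfolding sum_distrib_left by (intro sum_mono hterm)
  have "(\<Sum>k\<le>m. g (k+2)) = (\<Sum>j\<in>(\<lambda>k. k+2) ` {..m}. g j)"
    by (subst sum.reindex) (auto simp: inj_on_def)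
  also have "\<dots> \<le> (\<Sum>j\<le>m+2. g j)"
    by (intro sum_mono2) (auto simp: gnn)
  also have "(\<Sum>j\<le>m+2. g j) = (p + (1-p))^(m+2)"
    unfolding g_def by (subst binomial_ring) (simp add: atLeast0AtMost)
  also have "\<dots> = 1" by simp
  finally have S2: "(\<Sum>k\<le>m. g (k+2)) \<le> 1" .
  have "c \<ge> 0" unfolding c_def using p by auto
  with S2 have "c * (\<Sum>k\<le>m. g (k+2)) \<le> c" by (simp add: mult_left_le)
  with S1 show ?thesis unfolding c_def by linarith
qed

lemma prob_as_suminf:
  "(\<Sum>k. pmf T k * (if P k then 1 else 0)) = measure_pmf.prob T {k. P k}"
proof -
  have "(\<lambda>k. if k \<in> {k. P k} then pmf T k else 0) sums infsetsum (pmf T) {k. P k}"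
    by (rule sums_infsetsum_nat) (rule pmf_abs_summable)
  moreover have "(\<lambda>k. if k \<in> {k. P k} then pmf T k else 0) = (\<lambda>k. pmf T k * (if P k then 1 else 0))"
    by auto
  ultimately show ?thesis
    by (simp add: sums_iff measure_pmf_conv_infsetsum)
qed

lemma lam_prob: "lam T I i = measure_pmf.prob T {k. I k i}"
  unfolding lam_def q_def by (rule prob_as_suminf)

lemma rho_prob: "rho T J j = measure_pmf.prob T {k. J k j}"
  unfolding rho_def q_def by (rule prob_as_suminf)

lemma bern: "map_pmf P T = bernoulli_pmf (measure_pmf.prob T {k. P k})"
proof (rule pmf_eqI)
  fix b :: bool
  have c: "measure_pmf.prob T {k. \<not> P k} = 1 - measure_pmf.prob T {k. P k}"
    using measure_pmf.prob_compl[of "{k. P k}" T] by (simp add: Compl_eq_Diff_UNIV[symmetric] Collect_neg_eq)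
  show "pmf (map_pmf P T) b = pmf (bernoulli_pmf (measure_pmf.prob T {k. P k})) b"
    by (cases b) (auto simp: pmf_map vimage_def c)
qed

lemma binom_count:
  assumes "finite R"
  shows "map_pmf (\<lambda>g. card {u\<in>R. P (g u)}) (Pi_pmf R d (\<lambda>_. T))
           = binomial_pmf (card R) (measure_pmf.prob T {k. P k})"
proof -
  have "binomial_pmf (card R) (measure_pmf.prob T {k. P k})
      = map_pmf (\<lambda>f. card {x\<in>R. f x}) (Pi_pmf R (P d) (\<lambda>_. bernoulli_pmf (measure_pmf.prob T {k. P k})))"
    by (rule binomial_pmf_altdef') (use assms in auto)
  also have "Pi_pmf R (P d) (\<lambda>_. bernoulli_pmf (measure_pmf.prob T {k. P k})) = Pi_pmf R (P d) (\<lambda>_. map_pmf P T)"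
    by (simp add: bern)
  also have "\<dots> = map_pmf (\<lambda>h. P \<circ> h) (Pi_pmf R d (\<lambda>_. T))"
    by (rule Pi_pmf_map) (use assms in auto)
  finally show ?thesis by (simp add: pmf.map_comp o_def)
qed

lemma binom_inv_nn:
  fixes p :: real
  assumes p: "0 < p" "p \<le> 1"
  shows "(\<integral>\<^sup>+k. ennreal (1/(1+real k)^2) \<partial>binomial_pmf m p) \<le> ennreal (2/((real m+1)*(real m+2)*p^2))"
proof -
  have sub: "set_pmf (binomial_pmf m p) \<subseteq> {..m}"
    using p by (auto simp: set_pmf_binomial_eq split: if_splits)
  have "(\<integral>\<^sup>+k. ennreal (1/(1+real k)^2) \<partial>binomial_pmf m p)
        = (\<Sum>k\<le>m. ennreal (1/(1+real k)^2) * ennreal (pmf (binomial_pmf m p) k))"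
    by (rule nn_integral_measure_pmf_support) (use sub in auto)
  also have "\<dots> = ennreal (\<Sum>k\<le>m. real (m choose k) * p^k * (1-p)^(m-k) * (1/(1+real k)^2))"
    using p by (subst sum_ennreal[symmetric]) (auto simp: ennreal_mult''[symmetric] mult.commute)
  also have "\<dots> \<le> ennreal (2/((real m+1)*(real m+2)*p^2))"
    by (rule ennreal_leI) (rule binom_inv_sum[OF p])
  finally show ?thesis .
qed

lemma amgm_inv:
  fixes x y :: real
  assumes "0 \<le> x" "0 \<le> y"
  shows "1/((1+x)*(1+y)) \<le> 1/2 * (1/(1+x)^2) + 1/2 * (1/(1+y)^2)"
proof -
  define a where "a = 1/(1+x)"
  define b where "b = 1/(1+y)"
  have "0 \<le> (a-b)^2" by simp
  hence "a*b \<le> 1/2*a^2 + 1/2*b^2" by (simp add: power2_eq_square algebra_simps)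
  thus ?thesis unfolding a_def b_def by (simp add: power_divide)
qed

lemma inv_pair_bound:
  assumes R: "finite R" and d: "0 < \<delta>"
    and dP: "\<delta> \<le> measure_pmf.prob T {k. P k}" and dQ: "\<delta> \<le> measure_pmf.prob T {k. Q k}"
  shows "(\<integral>\<^sup>+g. ennreal (1/((1+real (card {u\<in>R. P (g u)}))*(1+real (card {u\<in>R. Q (g u)}))))
            \<partial>Pi_pmf R d0 (\<lambda>_. T))
         \<le> ennreal (2/((real (card R)+1)*(real (card R)+2)*\<delta>^2))"
proof -
  define M where "M = Pi_pmf R d0 (\<lambda>_. T)"
  define B where "B = 2/((real (card R)+1)*(real (card R)+2)*\<delta>^2)"
  have one: "(\<integral>\<^sup>+g. ennreal (1/(1+real (card {u\<in>R. S (g u)}))^2) \<partial>M) \<le> ennreal B"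
    if dS: "\<delta> \<le> measure_pmf.prob T {k. S k}" for S
  proof -
    let ?p = "measure_pmf.prob T {k. S k}"
    have "(\<integral>\<^sup>+g. ennreal (1/(1+real (card {u\<in>R. S (g u)}))^2) \<partial>M)
          = (\<integral>\<^sup>+k. ennreal (1/(1+real k)^2) \<partial>map_pmf (\<lambda>g. card {u\<in>R. S (g u)}) M)"
      by simp
    also have "\<dots> = (\<integral>\<^sup>+k. ennreal (1/(1+real k)^2) \<partial>binomial_pmf (card R) ?p)"
      unfolding M_def binom_count[OF R] by (rule refl)
    also have "\<dots> \<le> ennreal (2/((real (card R)+1)*(real (card R)+2)*?p^2))"
      by (rule binom_inv_nn) (use d dS in auto)
    also have "\<dots> \<le> ennreal B"
      unfolding B_def using d dS
      by (intro ennreal_leI divide_left_mono mult_left_mono power_mono mult_pos_pos) auto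
    finally show ?thesis .
  qed
  have "(\<integral>\<^sup>+g. ennreal (1/((1+real (card {u\<in>R. P (g u)}))*(1+real (card {u\<in>R. Q (g u)})))) \<partial>M)
     \<le> (\<integral>\<^sup>+g. ennreal (1/2) * ennreal (1/(1+real (card {u\<in>R. P (g u)}))^2)
              + ennreal (1/2) * ennreal (1/(1+real (card {u\<in>R. Q (g u)}))^2) \<partial>M)"
  proof (intro nn_integral_mono)
    fix g
    define x where "x = real (card {u\<in>R. P (g u)})"
    define y where "y = real (card {u\<in>R. Q (g u)})"
    have e: "ennreal (1/2*a + 1/2*b) = ennreal (1/2)*ennreal a + ennreal (1/2)*ennreal b"
      if "0 \<le> a" "0 \<le> b" for a b :: real
    proof -
      have h1: "ennreal (1/2*a) = ennreal (1/2)*ennreal a" by (rule ennreal_mult) (use that in auto)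
      have h2: "ennreal (1/2*b) = ennreal (1/2)*ennreal b" by (rule ennreal_mult) (use that in auto)
      have "ennreal (1/2*a + 1/2*b) = ennreal (1/2*a) + ennreal (1/2*b)" by (rule ennreal_plus) (use that in auto)
      then show ?thesis by (simp only: h1 h2)
    qed
    have "ennreal (1/((1+x)*(1+y))) \<le> ennreal (1/2 * (1/(1+x)^2) + 1/2 * (1/(1+y)^2))"
      by (intro ennreal_leI amgm_inv) (auto simp: x_def y_def)
    also have "\<dots> = ennreal (1/2)*ennreal (1/(1+x)^2) + ennreal (1/2)*ennreal (1/(1+y)^2)"
      by (rule e) auto
    finally show "ennreal (1/((1+real (card {u\<in>R. P (g u)}))*(1+real (card {u\<in>R. Q (g u)}))))
     \<le> ennreal (1/2) * ennreal (1/(1+real (card {u\<in>R. P (g u)}))^2)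
              + ennreal (1/2) * ennreal (1/(1+real (card {u\<in>R. Q (g u)}))^2)"
      unfolding x_def y_def .
  qed
  also have "\<dots> = ennreal (1/2) * (\<integral>\<^sup>+g. ennreal (1/(1+real (card {u\<in>R. P (g u)}))^2) \<partial>M)
              + ennreal (1/2) * (\<integral>\<^sup>+g. ennreal (1/(1+real (card {u\<in>R. Q (g u)}))^2) \<partial>M)"
    by (simp add: nn_integral_add nn_integral_cmult)
  also have "\<dots> \<le> ennreal (1/2) * ennreal B + ennreal (1/2) * ennreal B"
    by (intro add_mono mult_left_mono one dP dQ) auto
  also have "\<dots> = ennreal B"
  proof -
    have h: "ennreal (1/2) + ennreal (1/2) = 1" by (subst ennreal_plus[symmetric]) auto
    have "ennreal (1/2) * ennreal B + ennreal (1/2) * ennreal B = (ennreal (1/2) + ennreal (1/2)) * ennreal B"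
      by (rule distrib_right[symmetric])
    then show ?thesis unfolding h by simp
  qed
  finally show ?thesis unfolding M_def B_def .
qed

lemma card_insert_bound:
  assumes A: "finite A" "v \<in> A" and R: "R \<subseteq> A" "v \<notin> R"
    and f: "\<And>u. u \<in> R \<Longrightarrow> f u = g u" and Pv: "P (f v)"
  shows "1 + real (card {u\<in>R. P (g u)}) \<le> real (card {u\<in>A. P (f u)})"
proof -
  have "insert v {u\<in>R. P (g u)} \<subseteq> {u\<in>A. P (f u)}" using A R f Pv by auto
  hence "card (insert v {u\<in>R. P (g u)}) \<le> card {u\<in>A. P (f u)}"
    by (rule card_mono[rotated]) (use A in auto)
  moreover have "card (insert v {u\<in>R. P (g u)}) = Suc (card {u\<in>R. P (g u)})"
    using A R by (intro card_insert_disjoint) (auto intro: finite_subset)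
  ultimately show ?thesis by simp
qed

lemma inv_prod_mono:
  fixes a b a' b' :: real
  assumes "1 \<le> a'" "a' \<le> a" "1 \<le> b'" "b' \<le> b"
  shows "1/(a*b) \<le> 1/(a'*b')"
  using assms by (intro divide_left_mono mult_mono mult_pos_pos) auto

lemma pair_term:
  assumes A: "finite A" "v \<in> A" "w \<in> A" "v \<noteq> w" and Pt: "P t" and Qs: "Q s"
  shows "(\<integral>\<^sup>+f. ennreal ((if f v = t then 1 else 0) * (if f w = s then 1 else 0)
             / (real (card {u\<in>A. P (f u)}) * real (card {u\<in>A. Q (f u)}))) \<partial>Pi_pmf A d (\<lambda>_. T))
   \<le> ennreal (pmf T t) * ennreal (pmf T s) *
      (\<integral>\<^sup>+g. ennreal (1/((1+real (card {u\<in>A-{v,w}. P (g u)}))*(1+real (card {u\<in>A-{v,w}. Q (g u)}))))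
            \<partial>Pi_pmf (A-{v,w}) d (\<lambda>_. T))"
proof -
  define R where "R = A - {v,w}"
  define H where "H = (\<lambda>f. ennreal ((if f v = t then 1 else 0) * (if f w = s then 1 else 0)
             / (real (card {u\<in>A. P (f u)}) * real (card {u\<in>A. Q (f u)}))))"
  define \<Phi> where "\<Phi> = (\<lambda>g. ennreal (1/((1+real (card {u\<in>R. P (g u)}))*(1+real (card {u\<in>R. Q (g u)})))))"
  have AR: "A = insert v (insert w R)" using A unfolding R_def by auto
  have fR: "finite R" using A unfolding R_def by auto
  have vR: "v \<notin> insert w R" and wR: "w \<notin> R" using A unfolding R_def by auto
  have PiA: "Pi_pmf A d (\<lambda>_. T) = map_pmf (\<lambda>(y,f). f(v:=y)) (pair_pmf T
               (map_pmf (\<lambda>(z,g). g(w:=z)) (pair_pmf T (Pi_pmf R d (\<lambda>_. T)))))"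
    unfolding AR using fR vR wR by (simp add: Pi_pmf_insert)
  have pt: "H ((g(w:=z))(v:=y)) \<le> \<Phi> g * indicator {s} z * indicator {t} y" for g y z
  proof (cases "y = t \<and> z = s")
    case True
    let ?f = "(g(w:=z))(v:=y)"
    have fv: "?f v = t" "?f w = s" using True A by auto
    have c1: "1 + real (card {u\<in>R. P (g u)}) \<le> real (card {u\<in>A. P (?f u)})"
      by (rule card_insert_bound[of A v R]) (use A fv Pt in \<open>auto simp: R_def\<close>)
    have c2: "1 + real (card {u\<in>R. Q (g u)}) \<le> real (card {u\<in>A. Q (?f u)})"
      by (rule card_insert_bound[of A w R]) (use A fv Qs in \<open>auto simp: R_def\<close>)
    have "1 / (real (card {u\<in>A. P (?f u)}) * real (card {u\<in>A. Q (?f u)}))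
          \<le> 1/((1+real (card {u\<in>R. P (g u)}))*(1+real (card {u\<in>R. Q (g u)})))"
      by (rule inv_prod_mono[OF _ c1 _ c2]) auto
    then show ?thesis using True fv unfolding H_def \<Phi>_def by (auto intro: ennreal_leI)
  next
    case False
    then have "?thesis \<longleftrightarrow> H ((g(w:=z))(v:=y)) \<le> 0"
      by (auto simp: indicator_def)
    moreover have "H ((g(w:=z))(v:=y)) = 0"
      using False A unfolding H_def by auto
    ultimately show ?thesis by simp
  qed
  have "(\<integral>\<^sup>+f. H f \<partial>Pi_pmf A d (\<lambda>_. T))
      = (\<integral>\<^sup>+y. \<integral>\<^sup>+z. \<integral>\<^sup>+g. H ((g(w:=z))(v:=y)) \<partial>Pi_pmf R d (\<lambda>_. T) \<partial>T \<partial>T)"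
    unfolding PiA by (simp add: nn_integral_pair_pmf')
  also have "\<dots> \<le> (\<integral>\<^sup>+y. \<integral>\<^sup>+z. \<integral>\<^sup>+g. \<Phi> g * indicator {s} z * indicator {t} y \<partial>Pi_pmf R d (\<lambda>_. T) \<partial>T \<partial>T)"
    by (intro nn_integral_mono pt)
  also have "\<dots> = (\<integral>\<^sup>+g. \<Phi> g \<partial>Pi_pmf R d (\<lambda>_. T)) * ennreal (pmf T s) * ennreal (pmf T t)"
    by (simp add: nn_integral_multc nn_integral_cmult_indicator emeasure_pmf_single)
  also have "\<dots> = ennreal (pmf T t) * ennreal (pmf T s) * (\<integral>\<^sup>+g. \<Phi> g \<partial>Pi_pmf R d (\<lambda>_. T))"
    by (simp add: ac_simps)
  finally show ?thesis unfolding H_def \<Phi>_def R_def .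
qed

lemma diag_term:
  assumes A: "finite A" "v \<in> A" and Pt: "P t" and Qs: "Q t"
  shows "(\<integral>\<^sup>+f. ennreal ((if f v = t then 1 else 0) * (if f v = t then 1 else 0)
             / (real (card {u\<in>A. P (f u)}) * real (card {u\<in>A. Q (f u)}))) \<partial>Pi_pmf A d (\<lambda>_. T))
   \<le> ennreal (pmf T t) *
      (\<integral>\<^sup>+g. ennreal (1/((1+real (card {u\<in>A-{v}. P (g u)}))*(1+real (card {u\<in>A-{v}. Q (g u)}))))
            \<partial>Pi_pmf (A-{v}) d (\<lambda>_. T))"
proof -
  define R where "R = A - {v}"
  define H where "H = (\<lambda>f. ennreal ((if f v = t then 1 else 0) * (if f v = t then 1 else 0)
             / (real (card {u\<in>A. P (f u)}) * real (card {u\<in>A. Q (f u)}))))"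
  define \<Phi> where "\<Phi> = (\<lambda>g. ennreal (1/((1+real (card {u\<in>R. P (g u)}))*(1+real (card {u\<in>R. Q (g u)})))))"
  have AR: "A = insert v R" using A unfolding R_def by auto
  have fR: "finite R" using A unfolding R_def by auto
  have vR: "v \<notin> R" unfolding R_def by auto
  have PiA: "Pi_pmf A d (\<lambda>_. T) = map_pmf (\<lambda>(y,f). f(v:=y)) (pair_pmf T (Pi_pmf R d (\<lambda>_. T)))"
    unfolding AR using fR vR by (simp add: Pi_pmf_insert)
  have pt: "H (g(v:=y)) \<le> \<Phi> g * indicator {t} y" for g y
  proof (cases "y = t")
    case True
    let ?f = "g(v:=y)"
    have fv: "?f v = t" using True A by auto
    have c1: "1 + real (card {u\<in>R. P (g u)}) \<le> real (card {u\<in>A. P (?f u)})"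
      by (rule card_insert_bound[of A v R]) (use A fv Pt in \<open>auto simp: R_def\<close>)
    have c2: "1 + real (card {u\<in>R. Q (g u)}) \<le> real (card {u\<in>A. Q (?f u)})"
      by (rule card_insert_bound) (use A fv Qs in \<open>auto simp: R_def\<close>)
    have "1 / (real (card {u\<in>A. P (?f u)}) * real (card {u\<in>A. Q (?f u)}))
          \<le> 1/((1+real (card {u\<in>R. P (g u)}))*(1+real (card {u\<in>R. Q (g u)})))"
      by (rule inv_prod_mono[OF _ c1 _ c2]) auto
    then show ?thesis using True fv unfolding H_def \<Phi>_def by (auto intro: ennreal_leI)
  next
    case False
    then show ?thesis unfolding H_def by auto
  qed
  have "(\<integral>\<^sup>+f. H f \<partial>Pi_pmf A d (\<lambda>_. T))
      = (\<integral>\<^sup>+y. \<integral>\<^sup>+g. H (g(v:=y)) \<partial>Pi_pmf R d (\<lambda>_. T) \<partial>T)"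
    unfolding PiA by (simp add: nn_integral_pair_pmf')
  also have "\<dots> \<le> (\<integral>\<^sup>+y. \<integral>\<^sup>+g. \<Phi> g * indicator {t} y \<partial>Pi_pmf R d (\<lambda>_. T) \<partial>T)"
    by (intro nn_integral_mono pt)
  also have "\<dots> = (\<integral>\<^sup>+g. \<Phi> g \<partial>Pi_pmf R d (\<lambda>_. T)) * ennreal (pmf T t)"
    by (simp add: nn_integral_multc nn_integral_cmult_indicator emeasure_pmf_single)
  also have "\<dots> = ennreal (pmf T t) * (\<integral>\<^sup>+g. \<Phi> g \<partial>Pi_pmf R d (\<lambda>_. T))"
    by (simp add: ac_simps)
  finally show ?thesis unfolding H_def \<Phi>_def R_def .
qed



lemma card_as_sum: "finite A \<Longrightarrow> real (card {v\<in>A. P v}) = (\<Sum>v\<in>A. if P v then 1 else 0)"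
  by (simp add: sum.If_cases Int_def)

lemma sum_diag_const:
  fixes D Ob :: real
  assumes "finite A" "v \<in> A"
  shows "(\<Sum>w\<in>A. if v = w then D else Ob) = D + real (card A - 1) * Ob"
proof -
  have "(\<Sum>w\<in>A. if v = w then D else Ob) = (if v = v then D else Ob) + (\<Sum>w\<in>A-{v}. if v = w then D else Ob)"
    by (rule sum.remove) (use assms in auto)
  also have "(\<Sum>w\<in>A-{v}. if v = w then D else Ob) = (\<Sum>w\<in>A-{v}. Ob)"
    by (intro sum.cong) auto
  finally show ?thesis using assms by (simp add: card_Diff_singleton)
qed

lemma key:
  fixes T :: "nat pmf" and I J :: "nat \<Rightarrow> nat \<Rightarrow> bool" and \<delta> :: real
  assumes n: "2 \<le> n" and It: "I t i" and Js: "J s j" and d: "0 < \<delta>"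
    and dl: "0 < pmf T t \<Longrightarrow> 0 < pmf T s \<Longrightarrow>
             \<delta> \<le> measure_pmf.prob T {k. I k i} \<and> \<delta> \<le> measure_pmf.prob T {k. J k j}"
  shows "(\<integral>\<^sup>+f. ennreal (real (card {v. v<n \<and> I (f v) i \<and> f v = t}) / real (card {v. v<n \<and> I (f v) i})
              * (real (card {w. w<n \<and> J (f w) j \<and> f w = s}) / real (card {w. w<n \<and> J (f w) j})))
            \<partial>Pi_pmf {..<n} 0 (\<lambda>_. T))
         \<le> ennreal (2/\<delta>^2 * (pmf T t * pmf T s + (if t = s then pmf T t / real n else 0)))"
proof -
  define A where "A = {..<(n::nat)}"
  have fA: "finite A" and cA: "card A = n" unfolding A_def by auto
  define h where "h = (\<lambda>v w f. (if f v = t then 1 else 0) * (if f w = s then 1 else 0)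
             / (real (card {u\<in>A. I (f u) i}) * real (card {u\<in>A. J (f u) j})) :: real)"
  define Dd where "Dd = (if t = s then 2 * pmf T t / (\<delta>^2 * (real n * (real n + 1))) else 0)"
  define Od where "Od = 2 * pmf T t * pmf T s / (\<delta>^2 * ((real n - 1) * real n))"
  define b where "b = (\<lambda>v w::nat. if v = w then Dd else Od)"
  have rew: "real (card {v. v<n \<and> I (f v) i \<and> f v = t}) / real (card {v. v<n \<and> I (f v) i})
              * (real (card {w. w<n \<and> J (f w) j \<and> f w = s}) / real (card {w. w<n \<and> J (f w) j}))
           = (\<Sum>v\<in>A. \<Sum>w\<in>A. h v w f)" for f
  proof -
    have e1: "{v. v<n \<and> I (f v) i \<and> f v = t} = {v\<in>A. f v = t}" using It unfolding A_def by auto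
    have e2: "{v. v<n \<and> J (f v) j \<and> f v = s} = {v\<in>A. f v = s}" using Js unfolding A_def by auto
    have e3: "{v. v<n \<and> I (f v) i} = {u\<in>A. I (f u) i}" "{v. v<n \<and> J (f v) j} = {u\<in>A. J (f u) j}"
      unfolding A_def by auto
    show ?thesis
      unfolding e1 e2 e3 card_as_sum[OF fA] h_def
      by (simp add: sum_product sum_divide_distrib)
  qed
  have hnn: "0 \<le> h v w f" for v w f unfolding h_def by auto
  have hb: "(\<integral>\<^sup>+f. ennreal (h v w f) \<partial>Pi_pmf A 0 (\<lambda>_. T)) \<le> ennreal (b v w)"
    if vw: "v \<in> A" "w \<in> A" for v w
  proof (cases "v = w")
    case False
    have "(\<integral>\<^sup>+f. ennreal (h v w f) \<partial>Pi_pmf A 0 (\<lambda>_. T))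
        \<le> ennreal (pmf T t) * ennreal (pmf T s) *
      (\<integral>\<^sup>+g. ennreal (1/((1+real (card {u\<in>A-{v,w}. I (g u) i}))*(1+real (card {u\<in>A-{v,w}. J (g u) j}))))
            \<partial>Pi_pmf (A-{v,w}) 0 (\<lambda>_. T))"
      unfolding h_def by (rule pair_term[where P="\<lambda>k. I k i" and Q="\<lambda>k. J k j"]) (use fA vw False It Js in auto)
    also have "\<dots> \<le> ennreal (b v w)"
    proof (cases "0 < pmf T t \<and> 0 < pmf T s")
      case True
      have cR: "card (A - {v,w}) = n - 2" using fA vw False cA by (simp add: card_Diff_subset)
      have rn: "real (n - 2) = real n - 2" using n by simp
      have "ennreal (pmf T t) * ennreal (pmf T s) *
      (\<integral>\<^sup>+g. ennreal (1/((1+real (card {u\<in>A-{v,w}. I (g u) i}))*(1+real (card {u\<in>A-{v,w}. J (g u) j}))))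
            \<partial>Pi_pmf (A-{v,w}) 0 (\<lambda>_. T))
         \<le> ennreal (pmf T t) * ennreal (pmf T s) * ennreal (2/((real (card (A-{v,w}))+1)*(real (card (A-{v,w}))+2)*\<delta>^2))"
        by (intro mult_left_mono inv_pair_bound) (use fA d dl True in auto)
      also have "\<dots> = ennreal (pmf T t * pmf T s * (2/((real (card (A-{v,w}))+1)*(real (card (A-{v,w}))+2)*\<delta>^2)))"
      proof -
        have m1: "ennreal (pmf T t * pmf T s * c) = ennreal (pmf T t * pmf T s) * ennreal c" for c
          by (rule ennreal_mult') simp
        have m2: "ennreal (pmf T t * pmf T s) = ennreal (pmf T t) * ennreal (pmf T s)"
          by (rule ennreal_mult') simp
        show ?thesis unfolding m1 m2 ..
      qed
      also have "\<dots> = ennreal (b v w)"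
        using False n unfolding b_def Od_def cR rn
        by (intro arg_cong[where f=ennreal]) (simp add: field_simps)
      finally show ?thesis .
    next
      case False
      then have "pmf T t = 0 \<or> pmf T s = 0" using pmf_nonneg[of T t] pmf_nonneg[of T s] by linarith
      then show ?thesis by auto
    qed
    finally show ?thesis .
  next
    case True
    show ?thesis
    proof (cases "t = s")
      case ts: True
      have "(\<integral>\<^sup>+f. ennreal (h v w f) \<partial>Pi_pmf A 0 (\<lambda>_. T))
        \<le> ennreal (pmf T t) *
      (\<integral>\<^sup>+g. ennreal (1/((1+real (card {u\<in>A-{v}. I (g u) i}))*(1+real (card {u\<in>A-{v}. J (g u) j}))))
            \<partial>Pi_pmf (A-{v}) 0 (\<lambda>_. T))"
        unfolding h_def True ts by (rule diag_term[where P="\<lambda>k. I k i" and Q="\<lambda>k. J k j"]) (use fA vw It Js ts in auto)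
      also have "\<dots> \<le> ennreal (b v w)"
      proof (cases "0 < pmf T t")
        case True
        have cR: "card (A - {v}) = n - 1" using fA vw cA by (simp add: card_Diff_singleton)
        have rn: "real (n - 1) = real n - 1" using n by simp
        have "ennreal (pmf T t) *
      (\<integral>\<^sup>+g. ennreal (1/((1+real (card {u\<in>A-{v}. I (g u) i}))*(1+real (card {u\<in>A-{v}. J (g u) j}))))
            \<partial>Pi_pmf (A-{v}) 0 (\<lambda>_. T))
         \<le> ennreal (pmf T t) * ennreal (2/((real (card (A-{v}))+1)*(real (card (A-{v}))+2)*\<delta>^2))"
          by (intro mult_left_mono inv_pair_bound) (use fA d dl True ts in auto)
        also have "\<dots> = ennreal (pmf T t * (2/((real (card (A-{v}))+1)*(real (card (A-{v}))+2)*\<delta>^2)))"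
          by (rule ennreal_mult'[symmetric]) simp
        also have "\<dots> = ennreal (b v w)"
          using \<open>v = w\<close> ts n unfolding b_def Dd_def cR rn
          by (intro arg_cong[where f=ennreal]) (simp add: field_simps)
        finally show ?thesis .
      next
        case False
        then have "pmf T t = 0" using pmf_nonneg[of T t] by linarith
        then show ?thesis by auto
      qed
      finally show ?thesis .
    next
      case False
      have "h v w f = 0" for f unfolding h_def using True False by auto
      then show ?thesis by simp
    qed
  qed
  have bnn: "0 \<le> b v w" for v w
    unfolding b_def Dd_def Od_def using n d by auto
  have "(\<integral>\<^sup>+f. ennreal (real (card {v. v<n \<and> I (f v) i \<and> f v = t}) / real (card {v. v<n \<and> I (f v) i})
              * (real (card {w. w<n \<and> J (f w) j \<and> f w = s}) / real (card {w. w<n \<and> J (f w) j})))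
            \<partial>Pi_pmf {..<n} 0 (\<lambda>_. T))
      = (\<integral>\<^sup>+f. (\<Sum>v\<in>A. \<Sum>w\<in>A. ennreal (h v w f)) \<partial>Pi_pmf A 0 (\<lambda>_. T))"
  proof -
    have se: "ennreal (\<Sum>v\<in>A. \<Sum>w\<in>A. h v w f) = (\<Sum>v\<in>A. \<Sum>w\<in>A. ennreal (h v w f))" for f
      by (simp add: hnn sum_nonneg)
    show ?thesis unfolding rew A_def[symmetric] se ..
  qed
  also have "\<dots> = (\<Sum>v\<in>A. \<Sum>w\<in>A. \<integral>\<^sup>+f. ennreal (h v w f) \<partial>Pi_pmf A 0 (\<lambda>_. T))"
    by (simp add: nn_integral_sum)
  also have "\<dots> \<le> (\<Sum>v\<in>A. \<Sum>w\<in>A. ennreal (b v w))"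
    by (intro sum_mono hb)
  also have "\<dots> = ennreal (\<Sum>v\<in>A. \<Sum>w\<in>A. b v w)"
    using bnn by (simp add: sum_ennreal sum_nonneg)
  also have "(\<Sum>v\<in>A. \<Sum>w\<in>A. b v w) = real n * (Dd + (real n - 1) * Od)"
  proof -
    have "(\<Sum>v\<in>A. \<Sum>w\<in>A. b v w) = (\<Sum>v\<in>A. Dd + real (card A - 1) * Od)"
      unfolding b_def by (intro sum.cong refl sum_diag_const fA)
    then show ?thesis using cA n by simp
  qed
  also have "\<dots> \<le> 2/\<delta>^2 * (pmf T t * pmf T s + (if t = s then pmf T t / real n else 0))"
  proof -
    have o: "real n * ((real n - 1) * Od) = 2/\<delta>^2 * (pmf T t * pmf T s)"
      unfolding Od_def using n d by (simp add: field_simps)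
    have dd: "real n * Dd \<le> 2/\<delta>^2 * (if t = s then pmf T t / real n else 0)"
    proof (cases "t = s")
      case True
      have "real n * Dd = 2/\<delta>^2 * (pmf T t / (real n + 1))"
      proof -
        have np: "real n \<noteq> 0" "real n + 1 \<noteq> 0" "\<delta> \<noteq> 0" using n d by auto
        have gen: "\<And>x a D E::real. x \<noteq> 0 \<Longrightarrow> x * (2*a/(D*(x*E))) = 2/D*(a/E)" by simp
        show ?thesis unfolding Dd_def using True np by (simp add: gen)
      qed
      also have "\<dots> \<le> 2/\<delta>^2 * (pmf T t / real n)"
        using n d by (intro mult_left_mono divide_left_mono) auto
      finally show ?thesis using True by simp
    qed (simp add: Dd_def)
    show ?thesis using o dd by (simp add: distrib_left)
  qed
  finally show ?thesis by (meson ennreal_leI)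
qed



definition Fk :: "nat \<Rightarrow> (nat \<Rightarrow> nat \<Rightarrow> bool) \<Rightarrow> (nat \<Rightarrow> nat \<Rightarrow> bool) \<Rightarrow> nat \<Rightarrow> nat \<Rightarrow> nat \<Rightarrow> nat \<Rightarrow> (nat \<Rightarrow> nat) \<Rightarrow> real" where
  "Fk n I J t s i j f = real (card {v. v<n \<and> I (f v) i \<and> f v = t}) / real (card {v. v<n \<and> I (f v) i})
              * (real (card {w. w<n \<and> J (f w) j \<and> f w = s}) / real (card {w. w<n \<and> J (f w) j}))"

lemma nn_swap_pmf:
  fixes M :: "'a pmf" and N :: "'b pmf"
  shows "(\<integral>\<^sup>+x. \<integral>\<^sup>+y. f x y \<partial>N \<partial>M) = (\<integral>\<^sup>+y. \<integral>\<^sup>+x. f x y \<partial>M \<partial>N)"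
proof -
  have "(\<integral>\<^sup>+x. \<integral>\<^sup>+y. f x y \<partial>N \<partial>M) = (\<integral>\<^sup>+p. f (fst p) (snd p) \<partial>pair_pmf M N)"
    by (simp add: nn_integral_pair_pmf')
  also have "\<dots> = (\<integral>\<^sup>+p. f (snd p) (fst p) \<partial>pair_pmf N M)"
    by (subst pair_commute_pmf) (simp add: case_prod_beta)
  also have "\<dots> = (\<integral>\<^sup>+y. \<integral>\<^sup>+x. f x y \<partial>M \<partial>N)"
    by (simp add: nn_integral_pair_pmf')
  finally show ?thesis .
qed

lemma arc_emeasure:
  "emeasure (arc_pmf n tys I J c) {x. \<exists>v w. x = Some (v, w) \<and> tys v = t \<and> tys w = s}
   = ennreal (Fk n I J t s (fst c) (snd c) tys)"
proof -
  define V where "V = {v. v < n \<and> I (tys v) (fst c)}"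
  define W where "W = {w. w < n \<and> J (tys w) (snd c)}"
  define S where "S = {x. \<exists>v w. x = Some (v, w) \<and> tys v = t \<and> tys w = s}"
  have F: "Fk n I J t s (fst c) (snd c) tys = real (card (V \<inter> {v. tys v = t})) / real (card V)
            * (real (card (W \<inter> {w. tys w = s})) / real (card W))"
    unfolding Fk_def V_def W_def by (simp add: Int_def conj_ac)
  show ?thesis
  proof (cases "V = {} \<or> W = {}")
    case True
    then have "arc_pmf n tys I J c = return_pmf None"
      unfolding arc_pmf_def V_def W_def Let_def by auto
    moreover have "Fk n I J t s (fst c) (snd c) tys = 0" unfolding F using True by auto
    ultimately show ?thesis by simp
  next
    case False
    have fV: "finite V" "finite W" unfolding V_def W_def by auto
    have "arc_pmf n tys I J c = map_pmf Some (pair_pmf (pmf_of_set V) (pmf_of_set W))"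
      unfolding arc_pmf_def V_def W_def Let_def using False V_def W_def by auto
    then have "emeasure (arc_pmf n tys I J c) S = emeasure (pair_pmf (pmf_of_set V) (pmf_of_set W)) ({v. tys v = t} \<times> {w. tys w = s})"
      unfolding S_def by (simp add: vimage_def)
    also have "\<dots> = ennreal (measure_pmf.prob (pair_pmf (pmf_of_set V) (pmf_of_set W)) ({v. tys v = t} \<times> {w. tys w = s}))"
      by (simp add: measure_pmf.emeasure_eq_measure)
    also have "\<dots> = ennreal (measure_pmf.prob (pmf_of_set V) {v. tys v = t} * measure_pmf.prob (pmf_of_set W) {w. tys w = s})"
      by (subst measure_pmf_prob_product) auto
    also have "\<dots> = ennreal (Fk n I J t s (fst c) (snd c) tys)"
      unfolding F using False fV by (simp add: measure_pmf_of_set)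
    finally show ?thesis unfolding S_def .
  qed
qed

lemma nn_component:
  assumes "finite K" "a \<in> K"
  shows "(\<integral>\<^sup>+f. g (f a) \<partial>Pi_pmf K d p) = (\<integral>\<^sup>+x. g x \<partial>p a)"
proof -
  have "(\<integral>\<^sup>+f. g (f a) \<partial>Pi_pmf K d p) = (\<integral>\<^sup>+x. g x \<partial>map_pmf (\<lambda>f. f a) (Pi_pmf K d p))"
    by simp
  also have "map_pmf (\<lambda>f. f a) (Pi_pmf K d p) = p a"
    using Pi_pmf_component[OF assms(1), of a d p] assms by simp
  finally show ?thesis .
qed

lemma red:
  assumes a: "a < num_arcs n \<mu>"
  shows "emeasure (CCI n \<mu> T C I J) (arc_event a t s)
      = (\<integral>\<^sup>+c. \<integral>\<^sup>+f. ennreal (Fk n I J t s (fst c) (snd c) f) \<partial>Pi_pmf {..<n} 0 (\<lambda>_. T) \<partial>C)"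
proof -
  define K where "K = {..<num_arcs n \<mu>}"
  have K: "finite K" "a \<in> K" unfolding K_def using a by auto
  define S where "S = (\<lambda>tys::nat\<Rightarrow>nat. {x::(nat\<times>nat) option. \<exists>v w. x = Some (v, w) \<and> tys v = t \<and> tys w = s})"
  have ind: "indicator (arc_event a t s) (tys, arcs) = (indicator (S tys) (arcs a) :: ennreal)" for tys arcs
    unfolding arc_event_def S_def by (simp add: indicator_def)
  have "emeasure (CCI n \<mu> T C I J) (arc_event a t s) = (\<integral>\<^sup>+x. indicator (arc_event a t s) x \<partial>CCI n \<mu> T C I J)"
    by simp
  also have "\<dots> = (\<integral>\<^sup>+tys. \<integral>\<^sup>+cols. \<integral>\<^sup>+arcs. indicator (S tys) (arcs a)
        \<partial>Pi_pmf K None (\<lambda>a. arc_pmf n tys I J (cols a)) \<partial>Pi_pmf K (0, 0) (\<lambda>_. C) \<partial>Pi_pmf {..<n} 0 (\<lambda>_. T))"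
    unfolding CCI_def K_def by (simp add: ind)
  also have "\<dots> = (\<integral>\<^sup>+tys. \<integral>\<^sup>+cols. ennreal (Fk n I J t s (fst (cols a)) (snd (cols a)) tys)
        \<partial>Pi_pmf K (0, 0) (\<lambda>_. C) \<partial>Pi_pmf {..<n} 0 (\<lambda>_. T))"
    by (simp add: nn_component[OF K] arc_emeasure S_def)
  also have "\<dots> = (\<integral>\<^sup>+tys. \<integral>\<^sup>+c. ennreal (Fk n I J t s (fst c) (snd c) tys) \<partial>C \<partial>Pi_pmf {..<n} 0 (\<lambda>_. T))"
    by (simp add: nn_component[OF K, where g="\<lambda>c. ennreal (Fk n I J t s (fst c) (snd c) _)"])
  also have "\<dots> = (\<integral>\<^sup>+c. \<integral>\<^sup>+f. ennreal (Fk n I J t s (fst c) (snd c) f) \<partial>Pi_pmf {..<n} 0 (\<lambda>_. T) \<partial>C)"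
    by (rule nn_swap_pmf)
  finally show ?thesis .
qed



lemma final_ineq:
  fixes x p L R Ch :: real and n :: nat
  assumes n: "3 \<le> n" and x: "0 \<le> x" and R: "0 \<le> R" and Ch: "0 \<le> Ch"
    and L: "L = ln (real n) / sqrt (real n)"
  shows "Ch * (x^2 + (if b then x / real n else 0)) \<le> Ch * x * (x + L + R)"
proof -
  have "exp 1 \<le> (3::real)" using exp_le by simp
  also have "\<dots> \<le> real n" using n by simp
  finally have "1 \<le> ln (real n)" using n by (subst ln_ge_iff) auto
  moreover have "sqrt (real n) \<le> real n"
  proof -
    have "real n \<le> real n ^ 2" using n by (simp add: power2_eq_square)
    then have "sqrt (real n) \<le> sqrt (real n ^ 2)" by (rule real_sqrt_le_mono)
    then show ?thesis by simp
  qed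
  ultimately have "1 / real n \<le> L"
    unfolding L using n by (intro frac_le) auto
  then have "x / real n \<le> x * L" using mult_left_mono[OF \<open>1 / real n \<le> L\<close> x] by simp
  moreover have L0: "0 \<le> L" using \<open>1 / real n \<le> L\<close> order_trans[of 0 "1/real n" L] by simp
  moreover have "0 \<le> R * x" "0 \<le> L * x"
    using x R L0 by auto
  ultimately have "x^2 + (if b then x / real n else 0) \<le> x * (x + L + R)"
    by (auto simp: power2_eq_square algebra_simps)
  then show ?thesis using Ch by (simp add: mult.assoc mult_left_mono)
qed

theorem lemma11:
  fixes T :: "nat pmf" and C :: "(nat \<times> nat) pmf"
    and I J :: "nat \<Rightarrow> nat \<Rightarrow> bool" and \<mu> \<epsilon> \<tau> :: real
  assumes mu_pos: "\<mu> > 0"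
    and eps_pos: "\<epsilon> > 0"
    and moment: "summable (\<lambda>k. q T k * real k powr (1 + \<epsilon>))"
    and lam_inf: "\<exists>\<delta>>0. \<forall>i. lam T I i > 0 \<longrightarrow> lam T I i \<ge> \<delta>"
    and rho_inf: "\<exists>\<delta>>0. \<forall>j. rho T J j > 0 \<longrightarrow> rho T J j \<ge> \<delta>"
    and tau: "0 < \<tau>" "\<tau> < 1"
  shows "\<exists>Ch>0. \<forall>r>0. \<exists>N. \<forall>n\<ge>N. \<forall>t s a.
           (\<not> stable T n \<tau> t \<or> \<not> stable T n \<tau> s) \<and> a < num_arcs n \<mu> \<longrightarrow>
           measure_pmf.prob (CCI n \<mu> T C I J) (arc_event a t s)
             \<le> Ch * sqrt (q T t * q T s) *
                (sqrt (q T t * q T s) + ln (real n) / sqrt (real n) + 1 / real n powr r)"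
proof -
  obtain d1 where d1: "d1 > 0" "\<And>i. lam T I i > 0 \<Longrightarrow> lam T I i \<ge> d1" using lam_inf by auto
  obtain d2 where d2: "d2 > 0" "\<And>j. rho T J j > 0 \<Longrightarrow> rho T J j \<ge> d2" using rho_inf by auto
  define \<delta> where "\<delta> = min d1 d2"
  have d: "0 < \<delta>" unfolding \<delta>_def using d1 d2 by auto
  define Ch where "Ch = 2 / \<delta>^2"
  have Ch: "Ch > 0" unfolding Ch_def using d by auto
  have main: "measure_pmf.prob (CCI n \<mu> T C I J) (arc_event a t s)
              \<le> Ch * (pmf T t * pmf T s + (if t = s then pmf T t / real n else 0))"
    if n: "2 \<le> n" and a: "a < num_arcs n \<mu>" for n t s a
  proof -
    define B where "B = Ch * (pmf T t * pmf T s + (if t = s then pmf T t / real n else 0))"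
    have B0: "0 \<le> B" unfolding B_def using Ch by auto
    have inner: "(\<integral>\<^sup>+f. ennreal (Fk n I J t s (fst c) (snd c) f) \<partial>Pi_pmf {..<n} 0 (\<lambda>_. T)) \<le> ennreal B" for c
    proof (cases "I t (fst c) \<and> J s (snd c)")
      case True
      have dl: "\<delta> \<le> measure_pmf.prob T {k. I k (fst c)} \<and> \<delta> \<le> measure_pmf.prob T {k. J k (snd c)}"
        if pt: "0 < pmf T t" and ps: "0 < pmf T s"
      proof -
        have "pmf T t \<le> measure_pmf.prob T {k. I k (fst c)}"
          using True by (auto simp: measure_pmf_single[symmetric] intro!: measure_pmf.finite_measure_mono)
        then have "lam T I (fst c) > 0" using pt by (simp add: lam_prob)
        then have 1: "d1 \<le> measure_pmf.prob T {k. I k (fst c)}" using d1(2) by (simp add: lam_prob)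
        have "pmf T s \<le> measure_pmf.prob T {k. J k (snd c)}"
          using True by (auto simp: measure_pmf_single[symmetric] intro!: measure_pmf.finite_measure_mono)
        then have "rho T J (snd c) > 0" using ps by (simp add: rho_prob)
        then have 2: "d2 \<le> measure_pmf.prob T {k. J k (snd c)}" using d2(2) by (simp add: rho_prob)
        show ?thesis using 1 2 unfolding \<delta>_def by auto
      qed
      show ?thesis
        unfolding Fk_def B_def Ch_def
        by (rule key[OF n]) (use True d dl in auto)
    next
      case False
      have "Fk n I J t s (fst c) (snd c) f = 0" for f
      proof -
        have "{v. v<n \<and> I (f v) (fst c) \<and> f v = t} = {} \<or> {w. w<n \<and> J (f w) (snd c) \<and> f w = s} = {}"
          using False by auto
        then show ?thesis unfolding Fk_def by auto
      qed
      then show ?thesis by simp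
    qed
    have "ennreal (measure_pmf.prob (CCI n \<mu> T C I J) (arc_event a t s)) = emeasure (CCI n \<mu> T C I J) (arc_event a t s)"
      by (simp add: measure_pmf.emeasure_eq_measure)
    also have "\<dots> = (\<integral>\<^sup>+c. \<integral>\<^sup>+f. ennreal (Fk n I J t s (fst c) (snd c) f) \<partial>Pi_pmf {..<n} 0 (\<lambda>_. T) \<partial>C)"
      by (rule red[OF a])
    also have "\<dots> \<le> (\<integral>\<^sup>+c. ennreal B \<partial>C)"
      by (intro nn_integral_mono inner)
    also have "\<dots> = ennreal B" by simp
    finally show ?thesis unfolding B_def[symmetric] using B0 by simp
  qed
  show ?thesis
  proof (intro exI[of _ Ch] conjI allI impI Ch)
    fix r :: real assume r: "r > 0"
    show "\<exists>N. \<forall>n\<ge>N. \<forall>t s a.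
           (\<not> stable T n \<tau> t \<or> \<not> stable T n \<tau> s) \<and> a < num_arcs n \<mu> \<longrightarrow>
           measure_pmf.prob (CCI n \<mu> T C I J) (arc_event a t s)
             \<le> Ch * sqrt (q T t * q T s) *
                (sqrt (q T t * q T s) + ln (real n) / sqrt (real n) + 1 / real n powr r)"
    proof (intro exI[of _ 3] allI impI)
      fix n t s a assume n: "3 \<le> n"
        and h: "(\<not> stable T n \<tau> t \<or> \<not> stable T n \<tau> s) \<and> a < num_arcs n \<mu>"
      define x where "x = sqrt (q T t * q T s)"
      have x0: "0 \<le> x" unfolding x_def q_def by auto
      have x2: "x^2 = pmf T t * pmf T s" unfolding x_def q_def by simp
      have xt: "t = s \<Longrightarrow> x = pmf T t" unfolding x_def q_def by simp
      have "measure_pmf.prob (CCI n \<mu> T C I J) (arc_event a t s)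
              \<le> Ch * (pmf T t * pmf T s + (if t = s then pmf T t / real n else 0))"
        using main[of n a t s] n h by auto
      also have "\<dots> = Ch * (x^2 + (if t = s then x / real n else 0))"
        using x2 xt by auto
      also have "\<dots> \<le> Ch * x * (x + ln (real n) / sqrt (real n) + 1 / real n powr r)"
        by (rule final_ineq[OF n x0]) (use Ch in auto)
      finally show "measure_pmf.prob (CCI n \<mu> T C I J) (arc_event a t s)
             \<le> Ch * sqrt (q T t * q T s) *
                (sqrt (q T t * q T s) + ln (real n) / sqrt (real n) + 1 / real n powr r)"
        unfolding x_def .
    qed
  qed
qed


end
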